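(* Fix a characteristic generator $\tau$ such that $Y\sim\mathrm E_1(0,1,\tau)$ has a continuous distribution function $F$. For each $n\ge2$ let $\mathbf X^{(n)}\sim\mathrm E_n(\boldsymbol\mu^{(n)},\Sigma^{(n)},\tau)$ with $\mathbf 1^\top\Sigma^{(n)}\mathbf 1>0$, and suppose $\lim_{n\to\infty}\mathrm{AC}_{\Sigma^{(n)}}=0$. Then $\lim_{n\to\infty}\mathrm{DQ}^{\mathrm{VaR}}_\alpha(\mathbf X^{(n)})=0$ for every $\alpha\in(0,1/2)$, and, if in addition $\mathbb E|Y|<\infty$, $\lim_{n\to\infty}\mathrm{DQ}^{\mathrm{ES}}_\beta(\mathbf X^{(n)})=0$ for every $\beta\in(0,1)$.
   Context: Let $(\Omega,\mathcal F,\mathbb P)$ be an atomless probability space. For $\alpha\in[0,1)$ and a random variable $X$, $\mathrm{VaR}_\alpha(X)=\inf\{x\in\mathbb R:\mathbb P(X\le x)\ge 1-\alpha\}$; for $\alpha\in(0,1)$ and integrable $X$, $\mathrm{ES}_\alpha(X)=\frac1\alpha\int_0^\alpha\mathrm{VaR}_\beta(X)\,\mathrm d\beta$. For $\rho\in\{\mathrm{VaR},\mathrm{ES}\}$, $\alpha\in(0,1)$ and $\mathbf X=(X_1,\dots,X_n)$ (integrable components when $\rho=\mathrm{ES}$), $\mathrm{DQ}^\rho_\alpha(\mathbf X)=\alpha^*/\alpha$, where $\alpha^*=\inf\{\beta\in(0,1):\rho_\beta(\sum_{i=1}^nX_i)\le\sum_{i=1}^n\rho_\alpha(X_i)\}$,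 with $\inf\emptyset=1$. A random vector $\mathbf X$ in $\mathbb R^n$ has elliptical distribution $\mathrm E_n(\boldsymbol\mu,\Sigma,\tau)$, with $\boldsymbol\mu\in\mathbb R^n$, $\Sigma$ positive semi-definite and nonzero, and $\tau:[0,\infty)\to\mathbb R$, if $\mathbb E[\exp(\mathrm i\,\mathbf t^\top\mathbf X)]=\exp(\mathrm i\,\mathbf t^\top\boldsymbol\mu)\,\tau(\mathbf t^\top\Sigma\mathbf t)$ for all $\mathbf t\in\mathbb R^n$. For $\Sigma=(\sigma_{ij})_{n\times n}$ with $\sigma_i=\sqrt{\sigma_{ii}}$, the average correlation is $\mathrm{AC}_\Sigma=\sum_{i,j=1}^n\sigma_{ij}/(\sum_{i=1}^n\sigma_i)^2$. *)

theory Defs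
  imports "HOL-Probability.Probability"
begin

definition atomless :: "'a measure \<Rightarrow> bool" where
  "atomless M \<longleftrightarrow> (\<forall>A\<in>sets M. measure M A > 0 \<longrightarrow>
      (\<exists>B\<in>sets M. B \<subseteq> A \<and> 0 < measure M B \<and> measure M B < measure M A))"

definition VaR :: "'a measure \<Rightarrow> real \<Rightarrow> ('a \<Rightarrow> real) \<Rightarrow> real" where
  "VaR M \<alpha> X = Inf {x. measure M {\<omega>\<in>space M. X \<omega> \<le> x} \<ge> 1 - \<alpha>}"

definition ES :: "'a measure \<Rightarrow> real \<Rightarrow> ('a \<Rightarrow> real) \<Rightarrow> real" where
  "ES M \<alpha> X = (1 / \<alpha>) * (LBINT \<beta>=0..\<alpha>. VaR M \<beta> X)"

definition DQ :: "(real \<Rightarrow> ('a \<Rightarrow> real) \<Rightarrow> real) \<Rightarrow> real \<Rightarrow> nat \<Rightarrow> (nat \<Rightarrow> 'a \<Rightarrow> real) \<Rightarrow> real" where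
  "DQ \<rho> \<alpha> n X =
     (let S = {\<beta>\<in>{0<..<1}. \<rho> \<beta> (\<lambda>\<omega>. \<Sum>i<n. X i \<omega>) \<le> (\<Sum>i<n. \<rho> \<alpha> (X i))}
      in (if S = {} then 1 else Inf S) / \<alpha>)"

definition qform :: "nat \<Rightarrow> (nat \<Rightarrow> nat \<Rightarrow> real) \<Rightarrow> (nat \<Rightarrow> real) \<Rightarrow> real" where
  "qform n \<Sigma> t = (\<Sum>i<n. \<Sum>j<n. t i * \<Sigma> i j * t j)"

definition psd :: "nat \<Rightarrow> (nat \<Rightarrow> nat \<Rightarrow> real) \<Rightarrow> bool" where
  "psd n \<Sigma> \<longleftrightarrow> (\<forall>i<n. \<forall>j<n. \<Sigma> i j = \<Sigma> j i) \<and> (\<forall>t. qform n \<Sigma> t \<ge> 0)"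

definition elliptical ::
  "'a measure \<Rightarrow> nat \<Rightarrow> (nat \<Rightarrow> 'a \<Rightarrow> real) \<Rightarrow> (nat \<Rightarrow> real) \<Rightarrow> (nat \<Rightarrow> nat \<Rightarrow> real)
     \<Rightarrow> (real \<Rightarrow> real) \<Rightarrow> bool" where
  "elliptical M n X \<mu> \<Sigma> \<tau> \<longleftrightarrow>
     (\<forall>i<n. X i \<in> borel_measurable M) \<and> psd n \<Sigma> \<and> (\<exists>i<n. \<exists>j<n. \<Sigma> i j \<noteq> 0) \<and>
     (\<forall>t. (CLINT \<omega>|M. iexp (\<Sum>i<n. t i * X i \<omega>))
            = iexp (\<Sum>i<n. t i * \<mu> i) * complex_of_real (\<tau> (qform n \<Sigma> t)))"

definition AC :: "nat \<Rightarrow> (nat \<Rightarrow> nat \<Rightarrow> real) \<Rightarrow> real" where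
  "AC n \<Sigma> = (\<Sum>i<n. \<Sum>j<n. \<Sigma> i j) / (\<Sum>i<n. sqrt (\<Sigma> i i))^2"

end

theory Submission
  imports Defs
begin

lemma qform_scale: "qform n S (\<lambda>i. c * t i) = c^2 * qform n S t"
  unfolding qform_def by (simp add: sum_distrib_left power2_eq_square mult_ac)

lemma ell_char:
  assumes "elliptical M n X \<mu> S \<tau>"
  shows "(CLINT \<omega>|M. iexp (\<Sum>i<n. t i * X i \<omega>)) = iexp (\<Sum>i<n. t i * \<mu> i) * complex_of_real (\<tau> (qform n S t))"
  using assms unfolding elliptical_def by (elim conjE) (erule allE[of _ t])

lemma iexp_add: "iexp (a + b) = iexp a * iexp b"
  by (simp add: distrib_left exp_add)

lemma tau0:
  assumes "prob_space M" "elliptical M n X \<mu> S \<tau>"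
  shows "\<tau> 0 = 1"
proof -
  interpret prob_space M by fact
  have "(CLINT \<omega>|M. iexp (\<Sum>i<n. 0 * X i \<omega>)) = iexp (\<Sum>i<n. 0 * \<mu> i) * complex_of_real (\<tau> (qform n S (\<lambda>i. 0)))"
    using ell_char[OF assms(2), of "\<lambda>i. 0"] by simp
  moreover have "qform n S (\<lambda>i. 0) = 0" by (simp add: qform_def)
  ultimately have "complex_of_real (\<tau> 0) = 1" by (simp add: prob_space)
  then show ?thesis by (metis of_real_eq_1_iff)
qed

lemma ell_meas: "elliptical M n X \<mu> S \<tau> \<Longrightarrow> (\<lambda>\<omega>. \<Sum>i<n. t i * X i \<omega>) \<in> borel_measurable M"
  unfolding elliptical_def by (intro borel_measurable_sum borel_measurable_times) auto

lemma char_lin: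
  assumes "prob_space M" "elliptical M n X \<mu> S \<tau>" "qform n S t > 0"
  shows "char (distr M borel (\<lambda>\<omega>. ((\<Sum>i<n. t i * X i \<omega>) - (\<Sum>i<n. t i * \<mu> i)) / sqrt (qform n S t))) u = \<tau> (u^2)"
proof -
  interpret prob_space M by fact
  define s where "s = sqrt (qform n S t)"
  define m where "m = (\<Sum>i<n. t i * \<mu> i)"
  have s: "s > 0" "s^2 = qform n S t" using assms(3) by (auto simp: s_def)
  have meas: "(\<lambda>\<omega>. ((\<Sum>i<n. t i * X i \<omega>) - m) / s) \<in> borel_measurable M"
    using ell_meas[OF assms(2)] by measurable
  have "char (distr M borel (\<lambda>\<omega>. ((\<Sum>i<n. t i * X i \<omega>) - m) / s)) u
     = (CLINT \<omega>|M. iexp (u * (((\<Sum>i<n. t i * X i \<omega>) - m) / s)))"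
    unfolding char_def by (subst integral_distr[OF meas]) auto
  also have "\<dots> = (CLINT \<omega>|M. iexp (- u * m / s) * iexp (\<Sum>i<n. (u / s * t i) * X i \<omega>))"
  proof (rule Bochner_Integration.integral_cong[OF refl])
    fix \<omega>
    have e: "(\<Sum>i<n. (u / s * t i) * X i \<omega>) = u / s * (\<Sum>i<n. t i * X i \<omega>)"
      by (simp add: sum_distrib_left mult_ac)
    have "u * (((\<Sum>i<n. t i * X i \<omega>) - m) / s) = - u * m / s + (\<Sum>i<n. (u / s * t i) * X i \<omega>)"
      unfolding e using s by (simp add: field_simps)
    then show "iexp (u * (((\<Sum>i<n. t i * X i \<omega>) - m) / s)) = iexp (- u * m / s) * iexp (\<Sum>i<n. (u / s * t i) * X i \<omega>)"
      by (metis iexp_add)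
  qed
  also have "\<dots> = iexp (- u * m / s) * (CLINT \<omega>|M. iexp (\<Sum>i<n. (u / s * t i) * X i \<omega>))"
    by (rule integral_mult_right_zero)
  also have "(CLINT \<omega>|M. iexp (\<Sum>i<n. (u / s * t i) * X i \<omega>)) = iexp (\<Sum>i<n. (u / s * t i) * \<mu> i) * complex_of_real (\<tau> (qform n S (\<lambda>i. u / s * t i)))"
    by (rule ell_char[OF assms(2)])
  also have "qform n S (\<lambda>i. u / s * t i) = u^2"
  proof -
    have "qform n S (\<lambda>i. u / s * t i) = (u / s)^2 * qform n S t" by (rule qform_scale)
    moreover have "(u / s)^2 * s^2 = u^2" using s(1) by (simp add: power_divide)
    ultimately show ?thesis by (simp only: s(2))
  qed
  also have "(\<Sum>i<n. (u / s * t i) * \<mu> i) = u * m / s"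
    by (simp add: m_def sum_distrib_left sum_divide_distrib mult_ac)
  also have "iexp (- u * m / s) * (iexp (u * m / s) * complex_of_real (\<tau> (u\<^sup>2))) = \<tau> (u^2)"
  proof -
    have ee: "iexp (- u * m / s) * iexp (u * m / s) = 1" by (simp add: exp_add[symmetric])
    show ?thesis by (metis ee mult.assoc mult_1)
  qed
  finally show ?thesis by (simp add: s_def m_def)
qed


lemma ell_cdf_pos:
  assumes "prob_space M" "elliptical M n X \<mu> S \<tau>" "qform n S t > 0"
    "real_distribution N" "\<forall>u. char N u = \<tau> (u^2)"
  shows "measure M {\<omega>\<in>space M. (\<Sum>i<n. t i * X i \<omega>) \<le> x}
       = cdf N ((x - (\<Sum>i<n. t i * \<mu> i)) / sqrt (qform n S t))"
proof -
  interpret prob_space M by fact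
  define s where "s = sqrt (qform n S t)"
  define m where "m = (\<Sum>i<n. t i * \<mu> i)"
  have s: "s > 0" using assms(3) by (auto simp: s_def)
  define W where "W = (\<lambda>\<omega>. ((\<Sum>i<n. t i * X i \<omega>) - m) / s)"
  have meas: "W \<in> borel_measurable M"
    using ell_meas[OF assms(2)] unfolding W_def by measurable
  have rd: "real_distribution (distr M borel W)" using meas by simp
  have "char (distr M borel W) = char N"
    using char_lin[OF assms(1-3)] assms(5) by (auto simp: W_def s_def m_def)
  then have DN: "distr M borel W = N" using Levy_uniqueness[OF rd assms(4)] by simp
  have "cdf N ((x - m) / s) = measure (distr M borel W) {..(x - m) / s}"
    by (simp add: DN cdf_def)
  also have "\<dots> = measure M (W -` {..(x - m) / s} \<inter> space M)"
    by (rule measure_distr[OF meas]) auto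
  also have "W -` {..(x - m) / s} \<inter> space M = {\<omega>\<in>space M. (\<Sum>i<n. t i * X i \<omega>) \<le> x}"
    using s by (auto simp: W_def divide_right_mono divide_le_cancel)
  finally show ?thesis by (simp add: s_def m_def)
qed

lemma ell_cdf_zero:
  assumes "prob_space M" "elliptical M n X \<mu> S \<tau>" "qform n S t = 0"
  shows "measure M {\<omega>\<in>space M. (\<Sum>i<n. t i * X i \<omega>) \<le> x}
       = (if (\<Sum>i<n. t i * \<mu> i) \<le> x then 1 else 0)"
proof -
  interpret prob_space M by fact
  define m where "m = (\<Sum>i<n. t i * \<mu> i)"
  define Z where "Z = (\<lambda>\<omega>. (\<Sum>i<n. t i * X i \<omega>))"
  have meas: "Z \<in> borel_measurable M"
    using ell_meas[OF assms(2)] unfolding Z_def by measurable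
  have rd: "real_distribution (distr M borel Z)" using meas by simp
  have t0: "\<tau> 0 = 1" by (rule tau0[OF assms(1,2)])
  have rr: "real_distribution (return borel m)"
    unfolding real_distribution_def real_distribution_axioms_def
    by (auto intro: prob_space_return)
  have "char (distr M borel Z) u = char (return borel m) u" for u
  proof -
    have "char (distr M borel Z) u = (CLINT \<omega>|M. iexp (\<Sum>i<n. (u * t i) * X i \<omega>))"
      unfolding char_def using meas
      by (subst integral_distr) (auto simp: Z_def sum_distrib_left mult_ac)
    also have "\<dots> = iexp (\<Sum>i<n. (u * t i) * \<mu> i) * complex_of_real (\<tau> (qform n S (\<lambda>i. u * t i)))"
      by (rule ell_char[OF assms(2)])
    also have "\<dots> = iexp (u * m)"
      using assms(3) t0 by (simp add: qform_scale m_def sum_distrib_left mult_ac)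
    also have "\<dots> = char (return borel m) u"
      unfolding char_def by (simp add: integral_return)
    finally show ?thesis .
  qed
  then have DN: "distr M borel Z = return borel m"
    using Levy_uniqueness[OF rd rr] by auto
  have "measure M {\<omega>\<in>space M. Z \<omega> \<le> x} = measure M (Z -` {..x} \<inter> space M)"
    by (rule arg_cong[where f="measure M"]) auto
  also have "\<dots> = measure (distr M borel Z) {..x}"
    by (rule measure_distr[symmetric, OF meas]) auto
  also have "\<dots> = (if m \<le> x then 1 else 0)"
    by (simp add: DN measure_return)
  finally show ?thesis by (simp add: Z_def m_def)
qed


lemma cdfd: "real_distribution N \<Longrightarrow> cdf_distribution N"
  unfolding cdf_distribution_def by simp

lemma VaR_affine:
  assumes N: "real_distribution N" and g: "0 < \<gamma>" "\<gamma> < 1" and b: "b \<ge> 0"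
    and hb: "\<forall>x. measure M {\<omega>\<in>space M. Z \<omega> \<le> x}
               = (if b > 0 then cdf N ((x - a) / b) else (if a \<le> x then 1 else 0))"
  shows "VaR M \<gamma> Z = a + b * Inf {y. 1 - \<gamma> \<le> cdf N y}"
proof -
  interpret N: cdf_distribution N by (rule cdfd[OF N])
  define I where "I = Inf {y. 1 - \<gamma> \<le> cdf N y}"
  have pi: "1 - \<gamma> \<le> cdf N y \<longleftrightarrow> I \<le> y" for y
    unfolding I_def by (rule N.pseudoinverse) (use g in auto)
  have "{x. measure M {\<omega>\<in>space M. Z \<omega> \<le> x} \<ge> 1 - \<gamma>} = {a + b * I..}"
  proof (cases "b > 0")
    case True
    show ?thesis
    proof (rule set_eqI)
      fix x
      have "measure M {\<omega>\<in>space M. Z \<omega> \<le> x} = cdf N ((x - a) / b)" using hb True by simp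
      moreover have "1 - \<gamma> \<le> cdf N ((x - a) / b) \<longleftrightarrow> I \<le> (x - a) / b" by (rule pi)
      moreover have "I \<le> (x - a) / b \<longleftrightarrow> a + b * I \<le> x" using True by (simp add: pos_le_divide_eq algebra_simps)
      ultimately show "x \<in> {x. measure M {\<omega>\<in>space M. Z \<omega> \<le> x} \<ge> 1 - \<gamma>} \<longleftrightarrow> x \<in> {a + b * I..}" by auto
    qed
  next
    case False
    then show ?thesis using hb g b by auto
  qed
  then show ?thesis unfolding VaR_def I_def by simp
qed

definition QR :: "real measure" where "QR = restrict_space lborel {0<..<1::real}"

lemma prob_QR: "prob_space QR"
  unfolding QR_def by (auto simp add: emeasure_restrict_space space_restrict_space intro!: prob_spaceI)

lemma Q_meas:
  assumes N: "real_distribution N"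
  shows "(\<lambda>\<gamma>. Inf {y. 1 - \<gamma> \<le> cdf N y}) \<in> borel_measurable QR"
proof -
  interpret N: cdf_distribution N by (rule cdfd[OF N])
  have "mono_on {0<..<1} (\<lambda>\<gamma>. - Inf {y. 1 - \<gamma> \<le> cdf N y})"
  proof (rule mono_onI)
    fix r s :: real assume "r \<in> {0<..<1}" "s \<in> {0<..<1}" "r \<le> s"
    then show "- Inf {y. 1 - r \<le> cdf N y} \<le> - Inf {y. 1 - s \<le> cdf N y}"
      using N.mono_I unfolding mono_on_def by auto
  qed
  then have "(\<lambda>\<gamma>. - Inf {y. 1 - \<gamma> \<le> cdf N y}) \<in> borel_measurable (restrict_space borel {0<..<1})"
    by (rule borel_measurable_mono_on_fnc)
  moreover have eq: "sets QR = sets (restrict_space borel {0<..<1::real})"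
    unfolding QR_def by (simp add: sets_restrict_space)
  ultimately have "(\<lambda>\<gamma>. - Inf {y. 1 - \<gamma> \<le> cdf N y}) \<in> borel_measurable QR"
    by (simp add: measurable_cong_sets[OF eq refl])
  then have "(\<lambda>\<gamma>. - (- Inf {y. 1 - \<gamma> \<le> cdf N y})) \<in> borel_measurable QR"
    by measurable
  then show ?thesis by simp
qed

lemma Q_distr:
  assumes N: "real_distribution N"
  shows "distr QR borel (\<lambda>\<gamma>. Inf {y. 1 - \<gamma> \<le> cdf N y}) = N"
proof (rule cdf_unique)
  interpret N: cdf_distribution N by (rule cdfd[OF N])
  interpret Q: prob_space QR by (rule prob_QR)
  define V where "V = (\<lambda>\<gamma>. Inf {y. 1 - \<gamma> \<le> cdf N y})"
  have meas: "V \<in> borel_measurable QR" unfolding V_def by (rule Q_meas[OF N])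
  show "real_distribution (distr QR borel V)" using meas by simp
  show "real_distribution N" by fact
  show "cdf (distr QR borel V) = cdf N"
  proof
    fix x
    have "cdf (distr QR borel V) x = measure QR (V -` {..x} \<inter> space QR)"
      unfolding cdf_def by (rule measure_distr[OF meas]) auto
    also have "V -` {..x} \<inter> space QR = {\<gamma>. 0 < \<gamma> \<and> \<gamma> < 1 \<and> 1 - cdf N x \<le> \<gamma>}"
    proof (rule set_eqI)
      fix \<gamma>
      show "\<gamma> \<in> V -` {..x} \<inter> space QR \<longleftrightarrow> \<gamma> \<in> {\<gamma>. 0 < \<gamma> \<and> \<gamma> < 1 \<and> 1 - cdf N x \<le> \<gamma>}"
      proof (cases "0 < \<gamma> \<and> \<gamma> < 1")
        case True
        then have "1 - \<gamma> \<le> cdf N x \<longleftrightarrow> V \<gamma> \<le> x"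
          unfolding V_def by (intro N.pseudoinverse) auto
        then show ?thesis using True by (auto simp: QR_def space_restrict_space)
      next
        case False
        then show ?thesis by (auto simp: QR_def space_restrict_space)
      qed
    qed
    also have "measure QR {\<gamma>. 0 < \<gamma> \<and> \<gamma> < 1 \<and> 1 - cdf N x \<le> \<gamma>}
        = measure lborel {\<gamma>. 0 < \<gamma> \<and> \<gamma> < 1 \<and> 1 - cdf N x \<le> \<gamma>}"
      unfolding QR_def by (subst measure_restrict_space) (auto intro!: arg_cong[where f="measure lborel"])
    also have "\<dots> = cdf N x"
    proof (cases "cdf N x = 1")
      case True
      then have "{\<gamma>. 0 < \<gamma> \<and> \<gamma> < 1 \<and> 1 - cdf N x \<le> \<gamma>} = {0<..<1::real}" by auto
      then show ?thesis using True by simp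
    next
      case False
      then have "cdf N x < 1" using N.cdf_bounded_prob[of x] by linarith
      then have "{\<gamma>. 0 < \<gamma> \<and> \<gamma> < 1 \<and> 1 - cdf N x \<le> \<gamma>} = {1 - cdf N x..<1}" by auto
      then show ?thesis using N.cdf_nonneg[of x] by simp
    qed
    finally show "cdf (distr QR borel V) x = cdf N x" .
  qed
qed


lemma set_int_pos:
  fixes f :: "real \<Rightarrow> real"
  assumes "set_integrable lborel A f" "A \<in> sets lborel" "emeasure lborel A > 0"
    "\<And>x. x \<in> A \<Longrightarrow> f x > 0"
  shows "(LINT x:A|lborel. f x) > 0"
proof -
  have int: "integrable lborel (\<lambda>x. indicator A x *\<^sub>R f x)"
    using assms(1) by (simp add: set_integrable_def)
  have nn: "AE x in lborel. 0 \<le> indicator A x *\<^sub>R f x"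
    using assms(4) by (auto simp: indicator_def less_imp_le)
  have ge: "(LINT x:A|lborel. f x) \<ge> 0"
    unfolding set_lebesgue_integral_def
    using assms(4) by (intro Bochner_Integration.integral_nonneg) (auto simp: indicator_def less_imp_le)
  have "(LINT x:A|lborel. f x) \<noteq> 0"
  proof
    assume "(LINT x:A|lborel. f x) = 0"
    then have ae: "AE x in lborel. indicator A x *\<^sub>R f x = 0"
      using integral_nonneg_eq_0_iff_AE[OF int nn] by (simp add: set_lebesgue_integral_def)
    have eqs: "{x\<in>space lborel. \<not> indicator A x *\<^sub>R f x = (0::real)} = A"
    proof (rule set_eqI)
      fix x show "x \<in> {x\<in>space lborel. \<not> indicator A x *\<^sub>R f x = (0::real)} \<longleftrightarrow> x \<in> A"
        using assms(4)[of x] by (cases "x \<in> A") auto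
    qed
    have "emeasure lborel A = 0"
      using AE_iff_measurable[OF assms(2) eqs] ae by simp
    then show False using assms(3) by simp
  qed
  then show ?thesis using ge by simp
qed

locale Ydist =
  fixes N :: "real measure" and \<tau> :: "real \<Rightarrow> real"
  assumes rd: "real_distribution N"
    and chN: "\<And>u. char N u = \<tau> (u^2)"
    and cont: "\<And>x. isCont (cdf N) x"
begin

interpretation N: real_distribution N by (rule rd)
interpretation NC: cdf_distribution N by (rule cdfd[OF rd])

definition Q where "Q \<gamma> = Inf {y. 1 - \<gamma> \<le> cdf N y}"

lemma pinv: "0 < \<gamma> \<Longrightarrow> \<gamma> < 1 \<Longrightarrow> 1 - \<gamma> \<le> cdf N y \<longleftrightarrow> Q \<gamma> \<le> y"
  unfolding Q_def by (rule NC.pseudoinverse) auto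

lemma symm: "distr N borel uminus = N"
proof -
  have rd2: "real_distribution (distr N borel uminus)" by simp
  have "char (distr N borel uminus) u = char N u" for u
  proof -
    have "char (distr N borel uminus) u = (CLINT y|N. iexp ((-u) * y))"
      unfolding char_def by (subst integral_distr) auto
    also have "\<dots> = char N (-u)" by (simp add: char_def)
    finally show ?thesis by (simp add: chN)
  qed
  then show ?thesis using Levy_uniqueness[OF rd2 rd] by auto
qed

lemma cdf0: "cdf N 0 = 1/2"
proof -
  have "cdf N 0 = measure (distr N borel uminus) {..0}" by (simp add: symm cdf_def)
  also have "\<dots> = measure N (uminus -` {..0} \<inter> space N)"
    by (rule measure_distr) auto
  also have "uminus -` {..0} \<inter> space N = space N - {..<(0::real)}" by auto
  also have "measure N (space N - {..<0}) = 1 - measure N {..<0}"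
    by (rule N.prob_compl) auto
  also have "measure N {..<0} = measure N {..0} - measure N {0}"
  proof -
    have e: "{..0::real} = {..<0} \<union> {0}" by auto
    have "measure N ({..<0} \<union> {0}) = measure N {..<0} + measure N {0}"
      by (rule N.finite_measure_Union) auto
    then have "measure N {..0} = measure N {..<0} + measure N {0}"
      by (simp only: e)
    then show ?thesis by simp
  qed
  also have "measure N {0} = 0" using cont[of 0] finite_borel_measure.isCont_cdf[OF N.finite_borel_measure_M] by simp
  finally show ?thesis by (simp add: cdf_def)
qed

lemma Q_pos: "0 < \<gamma> \<Longrightarrow> \<gamma> < 1/2 \<Longrightarrow> Q \<gamma> > 0"
  using pinv[of \<gamma> 0] cdf0 by auto

lemma Q_neg: assumes "1/2 < \<gamma>" "\<gamma> < 1" shows "Q \<gamma> < 0"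
proof -
  have "(cdf N \<longlongrightarrow> cdf N 0) (at_left 0)"
    using cont[of 0] by (simp add: isCont_def filterlim_at_split)
  then have "eventually (\<lambda>x. cdf N x > 1 - \<gamma>) (at_left 0)"
    using assms cdf0 by (intro order_tendstoD(1)) auto
  then obtain b where b: "b < 0" "\<And>y. y > b \<Longrightarrow> y < 0 \<Longrightarrow> cdf N y > 1 - \<gamma>"
    unfolding eventually_at_left_field by auto
  have "cdf N (b/2) > 1 - \<gamma>" using b by auto
  then have "Q \<gamma> \<le> b/2" using pinv[of \<gamma> "b/2"] assms by auto
  then show ?thesis using b by linarith
qed

lemma mean0: assumes "integrable N (\<lambda>y. y)" shows "integral\<^sup>L N (\<lambda>y. y) = 0"
proof -
  have "integral\<^sup>L N (\<lambda>y. y) = integral\<^sup>L (distr N borel uminus) (\<lambda>y. y)" by (simp add: symm)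
  also have "\<dots> = integral\<^sup>L N (\<lambda>y. - y)" by (subst integral_distr) auto
  also have "\<dots> = - integral\<^sup>L N (\<lambda>y. y)" by simp
  finally show ?thesis by simp
qed

lemma QR_int: assumes "integrable N (\<lambda>y. y)"
  shows "integrable QR Q" "integral\<^sup>L QR Q = 0"
proof -
  have m: "Q \<in> borel_measurable QR" unfolding Q_def[abs_def] by (rule Q_meas[OF rd])
  have D: "distr QR borel Q = N" unfolding Q_def[abs_def] by (rule Q_distr[OF rd])
  have i1: "integrable (distr QR borel Q) (\<lambda>y. y)" by (subst D) (rule assms)
  show "integrable QR Q"
    using i1 integrable_distr_eq[OF m, of "\<lambda>y. y"] by simp
  have i2: "integral\<^sup>L (distr QR borel Q) (\<lambda>y. y) = 0" by (subst D) (rule mean0[OF assms])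
  show "integral\<^sup>L QR Q = 0"
    using i2 integral_distr[OF m, of "\<lambda>y. y"] by simp
qed

lemma QR_set: assumes "integrable N (\<lambda>y. y)"
  shows "set_integrable lborel {0<..<1} Q" "(LINT x:{0<..<1}|lborel. Q x) = 0"
  using QR_int[OF assms]
  by (auto simp: QR_def integrable_restrict_space integral_restrict_space set_integrable_def set_lebesgue_integral_def)

lemma E_int: assumes "integrable N (\<lambda>y. y)" "0 < \<beta>" "\<beta> < 1"
  shows "set_integrable lborel {0<..<\<beta>} Q"
  using QR_set(1)[OF assms(1)] by (rule set_integrable_subset) (use assms in auto)

lemma E_pos: assumes "integrable N (\<lambda>y. y)" "0 < \<beta>" "\<beta> < 1"
  shows "(LINT x:{0<..<\<beta>}|lborel. Q x) > 0"
proof -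
  have i1: "set_integrable lborel {0<..<\<beta>} Q" by (rule E_int[OF assms])
  have i2: "set_integrable lborel {\<beta>..<1} Q"
    using QR_set(1)[OF assms(1)] by (rule set_integrable_subset) (use assms in auto)
  have eq: "{0<..<1} = {0<..<\<beta>} \<union> {\<beta>..<1::real}" using assms by auto
  have u: "{0<..<\<beta>} \<inter> {\<beta>..<1::real} = {}" by auto
  have "(LINT x:({0<..<\<beta>} \<union> {\<beta>..<1})|lborel. Q x) = 0"
    using QR_set(2)[OF assms(1)] unfolding eq .
  then have sp: "0 = (LINT x:{0<..<\<beta>}|lborel. Q x) + (LINT x:{\<beta>..<1}|lborel. Q x)"
    using set_integral_Un[OF u i1 i2] by linarith
  show ?thesis
  proof (cases "\<beta> \<le> 1/2")
    case True
    show ?thesis using i1 assms True by (intro set_int_pos) (auto intro!: Q_pos)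
  next
    case False
    have "(LINT x:{\<beta>..<1}|lborel. - Q x) > 0"
      using integrable_minus[OF i2[unfolded set_integrable_def]] assms False
      by (intro set_int_pos) (auto intro!: Q_neg simp: set_integrable_def)
    then have "(LINT x:{\<beta>..<1}|lborel. Q x) < 0"
      by (simp add: set_integral_uminus[OF i2])
    then show ?thesis using sp by linarith
  qed
qed

end


lemma sum_ei: "i < (n::nat) \<Longrightarrow> (\<Sum>k<n. (if k = i then 1 else 0) * (f k :: real)) = f i"
proof -
  assume i: "i < n"
  have "(\<Sum>k<n. (if k = i then 1 else 0) * f k) = (\<Sum>k<n. if k = i then f k else 0)"
    by (rule sum.cong) auto
  also have "\<dots> = f i" using i by (simp add: sum.delta)
  finally show ?thesis .
qed

lemma sum_d2: "i < (n::nat) \<Longrightarrow> j < n \<Longrightarrow>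
  (\<Sum>l<n. f l * (x * (if l = i then 1 else 0) + y * (if l = j then 1 else 0))) = x * f i + (y::real) * f j"
proof -
  assume i: "i < n" and j: "j < n"
  have "(\<Sum>l<n. f l * (x * (if l = i then 1 else 0) + y * (if l = j then 1 else 0)))
      = (\<Sum>l<n. (if l = i then x * f l else 0)) + (\<Sum>l<n. (if l = j then y * f l else 0))"
    by (subst sum.distrib[symmetric]) (rule sum.cong, auto simp: algebra_simps)
  also have "\<dots> = x * f i + y * f j" using i j by (simp add: sum.delta)
  finally show ?thesis .
qed

lemma qform2:
  assumes "i < n" "j < n"
  shows "qform n S (\<lambda>k. x * (if k = i then 1 else 0) + y * (if k = j then 1 else 0))
       = x * (x * S i i + y * S i j) + y * (x * S j i + y * S j j)"
proof -
  let ?t = "\<lambda>k. x * (if k = i then 1 else 0) + y * (if k = j then 1 else 0)"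
  have "qform n S ?t = (\<Sum>k<n. ?t k * (\<Sum>l<n. S k l * ?t l))"
    unfolding qform_def by (simp add: sum_distrib_left mult.assoc)
  also have "\<dots> = (\<Sum>k<n. ?t k * (x * S k i + y * S k j))"
    using assms by (simp add: sum_d2)
  also have "\<dots> = (\<Sum>k<n. (x * S k i + y * S k j) * ?t k)"
    by (simp add: mult.commute)
  also have "\<dots> = x * (x * S i i + y * S i j) + y * (x * S j i + y * S j j)"
    using assms by (rule sum_d2)
  finally show ?thesis .
qed

lemma psd_diag: assumes "psd n S" "i < n" shows "S i i \<ge> 0"
proof -
  have "qform n S (\<lambda>k. 1 * (if k = i then 1 else 0) + 0 * (if k = i then 1 else 0)) \<ge> 0"
    using assms(1) unfolding psd_def by blast
  then show ?thesis using qform2[OF assms(2) assms(2), of S 1 0] by simp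
qed

lemma psd_off0:
  assumes "psd n S" "i < n" "j < n" "S i i = 0" "S j j = 0"
  shows "S i j = 0"
proof -
  have sym: "S j i = S i j" using assms(1-3) unfolding psd_def by auto
  have q: "qform n S (\<lambda>k. 1 * (if k = i then 1 else 0) + c * (if k = j then 1 else 0)) \<ge> 0" for c
    using assms(1) unfolding psd_def by blast
  have "1 * (1 * S i i + c * S i j) + c * (1 * S j i + c * S j j) \<ge> 0" for c
    using q[of c] qform2[OF assms(2,3), of S 1 c] by simp
  then have "2 * c * S i j \<ge> 0" for c using assms(4,5) sym by (simp add: algebra_simps)
  from this[of 1] this[of "-1"] show ?thesis by simp
qed

lemma psd_diag_pos:
  assumes "psd n S" "(\<Sum>i<n. \<Sum>j<n. S i j) > 0"
  shows "\<exists>i<n. S i i > 0"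
proof (rule ccontr)
  assume "\<not> ?thesis"
  then have z: "\<forall>i<n. S i i = 0" using psd_diag[OF assms(1)] by force
  have "\<forall>i<n. \<forall>j<n. S i j = 0" using psd_off0[OF assms(1)] z by blast
  then have "(\<Sum>i<n. \<Sum>j<n. S i j) = 0" by simp
  then show False using assms(2) by simp
qed

lemma qform_ei: "i < n \<Longrightarrow> qform n S (\<lambda>k. if k = i then 1 else 0) = S i i"
  using qform2[of i n i S 1 0] by simp

lemma qform_one: "qform n S (\<lambda>k. 1) = (\<Sum>i<n. \<Sum>j<n. S i j)"
  by (simp add: qform_def)

lemma set_integrable_const_Ioo: "set_integrable lborel {0<..<(g::real)} (\<lambda>_. a::real)"
proof -
  have "emeasure lborel {0<..<g} < \<top>"
    by (cases "0 \<le> g") auto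
  then show ?thesis
  unfolding set_integrable_def
  using integrable_mult_left[OF integrable_real_indicator[of "{0<..<g}" lborel], of a]
  by (simp add: mult.commute)
qed

lemma ES_aff:
  fixes Q :: "real \<Rightarrow> real"
  assumes V: "\<forall>\<delta>\<in>{0<..<1}. VaR M \<delta> Z = a + b * Q \<delta>" and g: "0 < \<gamma>" "\<gamma> < 1"
    and si: "set_integrable lborel {0<..<\<gamma>} Q"
  shows "ES M \<gamma> Z = a + b * ((LINT x:{0<..<\<gamma>}|lborel. Q x) / \<gamma>)"
proof -
  have "(LBINT \<beta>=0..\<gamma>. VaR M \<beta> Z) = (LINT x:{0<..<\<gamma>}|lborel. VaR M x Z)"
    using interval_integral_Ioo[of 0 \<gamma>] g by (simp add: zero_ereal_def)
  also have "\<dots> = (LINT x:{0<..<\<gamma>}|lborel. a + b * Q x)"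
    using V g by (intro set_lebesgue_integral_cong) auto
  also have "\<dots> = (LINT x:{0<..<\<gamma>}|lborel. a) + (LINT x:{0<..<\<gamma>}|lborel. b * Q x)"
    using si by (intro set_integral_add(2) set_integrable_const_Ioo) auto
  also have "(LINT x:{0<..<\<gamma>}|lborel. a) = \<gamma> * a"
    using g by (subst set_integral_const) auto
  finally have "(LBINT \<beta>=0..\<gamma>. VaR M \<beta> Z) = \<gamma> * a + b * (LINT x:{0<..<\<gamma>}|lborel. Q x)"
    by simp
  then show ?thesis unfolding ES_def using g by (simp add: field_simps)
qed

lemma DQ_lim:
  fixes R :: "nat \<Rightarrow> real \<Rightarrow> real" and T m s d g :: "nat \<Rightarrow> real" and h :: "real \<Rightarrow> real"
  assumes a: "\<alpha> > 0" "h \<alpha> > 0"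
    and ev: "\<And>n. n \<ge> 2 \<Longrightarrow> (\<forall>\<gamma>\<in>{0<..<1}. R n \<gamma> = m n + s n * h \<gamma>) \<and> T n = m n + d n * h \<alpha>
                     \<and> d n > 0 \<and> s n \<ge> 0 \<and> s n / d n = g n"
    and lim: "g \<longlonglongrightarrow> 0"
  shows "(\<lambda>n. (let S = {\<beta>\<in>{0<..<1}. R n \<beta> \<le> T n} in (if S = {} then 1 else Inf S) / \<alpha>)) \<longlonglongrightarrow> 0"
proof (rule LIMSEQ_I)
  fix r :: real assume r: "0 < r"
  define b0 where "b0 = min (r * \<alpha> / 2) (1/2)"
  have b0: "0 < b0" "b0 < 1" "b0 \<le> r * \<alpha> / 2" using r a by (auto simp: b0_def)
  define c where "c = h \<alpha> / (\<bar>h b0\<bar> + 1)"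
  have c: "c > 0" using a by (simp add: c_def)
  obtain no where no: "\<And>n. n \<ge> no \<Longrightarrow> norm (g n - 0) < c" using LIMSEQ_D[OF lim c] by blast
  show "\<exists>no. \<forall>n\<ge>no. norm ((let S = {\<beta>\<in>{0<..<1}. R n \<beta> \<le> T n} in (if S = {} then 1 else Inf S) / \<alpha>) - 0) < r"
  proof (intro exI allI impI)
    fix n assume n: "max no 2 \<le> n"
    have e: "\<forall>\<gamma>\<in>{0<..<1}. R n \<gamma> = m n + s n * h \<gamma>" "T n = m n + d n * h \<alpha>" "d n > 0" "s n \<ge> 0" "s n / d n = g n"
      using ev[of n] n by auto
    have "s n / d n < c" using no[of n] n e(5) by auto
    then have sc: "s n \<le> c * d n" using e(3) by (simp add: divide_less_eq)
    have "s n * h b0 \<le> s n * (\<bar>h b0\<bar> + 1)" using e(4) by (intro mult_left_mono) auto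
    also have "\<dots> \<le> c * d n * (\<bar>h b0\<bar> + 1)" using sc by (intro mult_right_mono) auto
    also have "\<dots> = d n * h \<alpha>" unfolding c_def by (simp add: field_simps)
    finally have "R n b0 \<le> T n" using e(1) e(2) b0 by auto
    then have inS: "b0 \<in> {\<beta>\<in>{0<..<1}. R n \<beta> \<le> T n}" using b0 by auto
    define S where "S = {\<beta>\<in>{0<..<1}. R n \<beta> \<le> T n}"
    have ne: "S \<noteq> {}" using inS by (auto simp: S_def)
    have bdd: "bdd_below S" by (rule bdd_belowI[of _ 0]) (auto simp: S_def)
    have le: "Inf S \<le> b0" using inS bdd by (auto simp: S_def intro: cInf_lower)
    have ge: "Inf S \<ge> 0" using ne by (intro cInf_greatest) (auto simp: S_def)
    have "Inf S / \<alpha> \<le> r / 2" using le b0 a by (simp add: divide_le_eq mult.commute)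
    moreover have "norm (Inf S / \<alpha> - 0) = Inf S / \<alpha>" using ge a by simp
    ultimately have "norm (Inf S / \<alpha> - 0) < r" using r by linarith
    then show "norm ((let S = {\<beta>\<in>{0<..<1}. R n \<beta> \<le> T n} in (if S = {} then 1 else Inf S) / \<alpha>) - 0) < r"
      unfolding Let_def S_def[symmetric] using ne by simp
  qed
qed


theorem proposition2:
  fixes M :: "'a measure" and \<tau> :: "real \<Rightarrow> real"
    and \<mu> :: "nat \<Rightarrow> nat \<Rightarrow> real" and \<Sigma> :: "nat \<Rightarrow> nat \<Rightarrow> nat \<Rightarrow> real"
    and X :: "nat \<Rightarrow> nat \<Rightarrow> 'a \<Rightarrow> real"
  assumes "prob_space M" and "atomless M"
    and Ycont: "\<And>N. real_distribution N \<Longrightarrow> (\<forall>t. char N t = complex_of_real (\<tau> (t\<^sup>2)))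
                  \<Longrightarrow> (\<forall>x. isCont (cdf N) x)"
    and ell: "\<And>n. n \<ge> 2 \<Longrightarrow> elliptical M n (X n) (\<mu> n) (\<Sigma> n) \<tau>"
    and pos: "\<And>n. n \<ge> 2 \<Longrightarrow> (\<Sum>i<n. \<Sum>j<n. \<Sigma> n i j) > 0"
    and AC0: "(\<lambda>n. AC n (\<Sigma> n)) \<longlonglongrightarrow> 0"
  shows "(\<forall>\<alpha>\<in>{0<..<1/2}. (\<lambda>n. DQ (VaR M) \<alpha> n (X n)) \<longlonglongrightarrow> 0)
       \<and> ((\<forall>N. real_distribution N \<longrightarrow> (\<forall>t. char N t = complex_of_real (\<tau> (t\<^sup>2)))
              \<longrightarrow> integrable N (\<lambda>y. y))
          \<longrightarrow> (\<forall>\<beta>\<in>{0<..<1}. (\<lambda>n. DQ (ES M) \<beta> n (X n)) \<longlonglongrightarrow> 0))"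
proof -
  interpret P: prob_space M by fact
  have ell2: "elliptical M 2 (X 2) (\<mu> 2) (\<Sigma> 2) \<tau>" using ell by simp
  have q2: "qform 2 (\<Sigma> 2) (\<lambda>k. 1) > 0" using pos[of 2] by (simp add: qform_one)
  define W where "W = (\<lambda>\<omega>. ((\<Sum>i<2. 1 * X 2 i \<omega>) - (\<Sum>i<2. 1 * \<mu> 2 i)) / sqrt (qform 2 (\<Sigma> 2) (\<lambda>k. 1)))"
  define N0 where "N0 = distr M borel W"
  have Wm: "W \<in> borel_measurable M"
    using ell_meas[OF ell2, of "\<lambda>k. 1"] unfolding W_def by measurable
  have rdN: "real_distribution N0" unfolding N0_def using Wm by simp
  have chN: "\<forall>u. char N0 u = complex_of_real (\<tau> (u\<^sup>2))"
    using char_lin[OF \<open>prob_space M\<close> ell2 q2] unfolding N0_def W_def by simp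
  have contN: "\<forall>x. isCont (cdf N0) x" by (rule Ycont[OF rdN chN])
  have c1: "\<And>u. char N0 u = complex_of_real (\<tau> (u\<^sup>2))" using chN by blast
  have c2: "\<And>x. isCont (cdf N0) x" using contN by blast
  interpret Y: Ydist N0 \<tau> by (rule Ydist.intro[OF rdN c1 c2])

  define q where "q n = (\<Sum>i<n. \<Sum>j<n. \<Sigma> n i j)" for n
  define m where "m n = (\<Sum>i<n. \<mu> n i)" for n
  define D where "D n = (\<Sum>i<n. sqrt (\<Sigma> n i i))" for n

  have psdn: "psd n (\<Sigma> n)" if n: "n \<ge> 2" for n
    using ell[OF n] unfolding elliptical_def by blast

  have VaRsum: "VaR M \<gamma> (\<lambda>\<omega>. \<Sum>i<n. X n i \<omega>) = m n + sqrt (q n) * Y.Q \<gamma>"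
    if n: "n \<ge> 2" and g: "0 < \<gamma>" "\<gamma> < 1" for n \<gamma>
  proof -
    have qp: "qform n (\<Sigma> n) (\<lambda>k. 1) > 0" using pos[OF n] by (simp add: qform_one)
    have h: "\<forall>x. measure M {\<omega>\<in>space M. (\<Sum>i<n. X n i \<omega>) \<le> x} = cdf N0 ((x - m n) / sqrt (q n))"
      using ell_cdf_pos[OF \<open>prob_space M\<close> ell[OF n] qp rdN chN] by (simp add: qform_one m_def q_def)
    have sq: "sqrt (q n) > 0" using pos[OF n] by (simp add: q_def)
    have "VaR M \<gamma> (\<lambda>\<omega>. \<Sum>i<n. X n i \<omega>) = m n + sqrt (q n) * Inf {y. 1 - \<gamma> \<le> cdf N0 y}"
      by (rule VaR_affine[OF rdN g]) (use h sq in auto)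
    then show ?thesis by (simp add: Y.Q_def)
  qed

  have VaRi: "VaR M \<gamma> (X n i) = \<mu> n i + sqrt (\<Sigma> n i i) * Y.Q \<gamma>"
    if n: "n \<ge> 2" and i: "i < n" and g: "0 < \<gamma>" "\<gamma> < 1" for n i \<gamma>
  proof -
    let ?t = "\<lambda>k. if k = i then 1 else (0::real)"
    have sx: "(\<Sum>k<n. ?t k * X n k \<omega>) = X n i \<omega>" for \<omega> by (rule sum_ei[OF i])
    have sm: "(\<Sum>k<n. ?t k * \<mu> n k) = \<mu> n i" by (rule sum_ei[OF i])
    have qf: "qform n (\<Sigma> n) ?t = \<Sigma> n i i" by (rule qform_ei[OF i])
    have nn: "\<Sigma> n i i \<ge> 0" by (rule psd_diag[OF psdn[OF n] i])
    have h: "\<forall>x. measure M {\<omega>\<in>space M. X n i \<omega> \<le> x}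
        = (if sqrt (\<Sigma> n i i) > 0 then cdf N0 ((x - \<mu> n i) / sqrt (\<Sigma> n i i)) else (if \<mu> n i \<le> x then 1 else 0))"
    proof (cases "\<Sigma> n i i > 0")
      case True
      have qp: "qform n (\<Sigma> n) ?t > 0" using True qf by simp
      show ?thesis
        using ell_cdf_pos[OF \<open>prob_space M\<close> ell[OF n] qp rdN chN] True
        unfolding sx sm qf by simp
    next
      case False
      then have z: "\<Sigma> n i i = 0" using nn by simp
      have qz: "qform n (\<Sigma> n) ?t = 0" using z qf by simp
      show ?thesis
        using ell_cdf_zero[OF \<open>prob_space M\<close> ell[OF n] qz] z
        unfolding sx sm by simp
    qed
    have "VaR M \<gamma> (X n i) = \<mu> n i + sqrt (\<Sigma> n i i) * Inf {y. 1 - \<gamma> \<le> cdf N0 y}"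
      by (rule VaR_affine[OF rdN g]) (use h nn in auto)
    then show ?thesis by (simp add: Y.Q_def)
  qed

  have Dpos: "D n > 0" if n: "n \<ge> 2" for n
  proof -
    obtain i where i: "i < n" "\<Sigma> n i i > 0" using psd_diag_pos[OF psdn[OF n] pos[OF n]] by blast
    show ?thesis unfolding D_def
      by (rule sum_pos2[of _ i]) (use i psd_diag[OF psdn[OF n]] in auto)
  qed

  have ACeq: "sqrt (q n) / D n = sqrt (AC n (\<Sigma> n))" if n: "n \<ge> 2" for n
    using Dpos[OF n] by (simp add: AC_def q_def D_def real_sqrt_divide)

  have glim: "(\<lambda>n. sqrt (AC n (\<Sigma> n))) \<longlonglongrightarrow> 0"
    using tendsto_real_sqrt[OF AC0] by simp

  have sqnn: "sqrt (q n) \<ge> 0" if "n \<ge> 2" for n using pos[OF that] by (simp add: q_def)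

  have part1: "\<forall>\<alpha>\<in>{0<..<1/2}. (\<lambda>n. DQ (VaR M) \<alpha> n (X n)) \<longlonglongrightarrow> 0"
  proof
    fix \<alpha> :: real assume a: "\<alpha> \<in> {0<..<1/2}"
    have T: "(\<Sum>i<n. VaR M \<alpha> (X n i)) = m n + D n * Y.Q \<alpha>" if n: "n \<ge> 2" for n
    proof -
      have "(\<Sum>i<n. VaR M \<alpha> (X n i)) = (\<Sum>i<n. \<mu> n i + sqrt (\<Sigma> n i i) * Y.Q \<alpha>)"
        using VaRi[OF n] a by (intro sum.cong) auto
      also have "\<dots> = m n + D n * Y.Q \<alpha>"
        by (simp add: sum.distrib sum_distrib_right m_def D_def)
      finally show ?thesis .
    qed
    show "(\<lambda>n. DQ (VaR M) \<alpha> n (X n)) \<longlonglongrightarrow> 0"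
      unfolding DQ_def
      by (rule DQ_lim[where m=m and s="\<lambda>n. sqrt (q n)" and d=D and h=Y.Q and g="\<lambda>n. sqrt (AC n (\<Sigma> n))"])
         (use a Y.Q_pos[of \<alpha>] VaRsum T Dpos sqnn ACeq glim in auto)
  qed

  have part2: "(\<forall>N. real_distribution N \<longrightarrow> (\<forall>t. char N t = complex_of_real (\<tau> (t\<^sup>2)))
              \<longrightarrow> integrable N (\<lambda>y. y))
          \<longrightarrow> (\<forall>\<beta>\<in>{0<..<1}. (\<lambda>n. DQ (ES M) \<beta> n (X n)) \<longlonglongrightarrow> 0)"
  proof (intro impI ballI)
    assume "\<forall>N. real_distribution N \<longrightarrow> (\<forall>t. char N t = complex_of_real (\<tau> (t\<^sup>2)))
              \<longrightarrow> integrable N (\<lambda>y. y)"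
    then have intN: "integrable N0 (\<lambda>y. y)" using rdN chN by blast
    define EE where "EE \<gamma> = (LINT x:{0<..<\<gamma>}|lborel. Y.Q x) / \<gamma>" for \<gamma>
    fix \<beta> :: real assume b: "\<beta> \<in> {0<..<1}"
    have EEpos: "EE \<beta> > 0" using Y.E_pos[OF intN] b by (simp add: EE_def)
    have ESsum: "ES M \<gamma> (\<lambda>\<omega>. \<Sum>i<n. X n i \<omega>) = m n + sqrt (q n) * EE \<gamma>"
      if n: "n \<ge> 2" and g: "0 < \<gamma>" "\<gamma> < 1" for n \<gamma>
      unfolding EE_def
      by (rule ES_aff[OF _ g Y.E_int[OF intN g]]) (use VaRsum[OF n] in auto)
    have ESi: "ES M \<beta> (X n i) = \<mu> n i + sqrt (\<Sigma> n i i) * EE \<beta>"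
      if n: "n \<ge> 2" and i: "i < n" for n i
      unfolding EE_def using b
      by (intro ES_aff[OF _ _ _ Y.E_int[OF intN]]) (use VaRi[OF n i] in auto)
    have T: "(\<Sum>i<n. ES M \<beta> (X n i)) = m n + D n * EE \<beta>" if n: "n \<ge> 2" for n
    proof -
      have "(\<Sum>i<n. ES M \<beta> (X n i)) = (\<Sum>i<n. \<mu> n i + sqrt (\<Sigma> n i i) * EE \<beta>)"
        using ESi[OF n] by (intro sum.cong) auto
      also have "\<dots> = m n + D n * EE \<beta>"
        by (simp add: sum.distrib sum_distrib_right m_def D_def)
      finally show ?thesis .
    qed
    show "(\<lambda>n. DQ (ES M) \<beta> n (X n)) \<longlonglongrightarrow> 0"
      unfolding DQ_def
      by (rule DQ_lim[where m=m and s="\<lambda>n. sqrt (q n)" and d=D and h=EE and g="\<lambda>n. sqrt (AC n (\<Sigma> n))"])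
         (use b EEpos ESsum T Dpos sqnn ACeq glim in auto)
  qed
  show ?thesis using part1 part2 by blast
qed

end
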